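(* Let $\mathbf m=(m_k)_{k\in\mathbb N}$ be a sequence of positive reals with $\sum_k m_k=\infty$ and assume that the limit $A:=\lim_{t\to\infty}\ell_t/t\in[0,\infty]$ exists. Then: (a) if $\mathsf F_t\to\mathsf F_*$ in $L^1$ with $\mathsf F_*\neq\delta_0$, then $\mu_t\to\mu_*$ weakly, where $\mu_*$ is defined by $\int f\,d\mu_*=A\int m f(m)\,d\mathsf F_*(m)$; (b) if $\mu_t\to\mu_*$ in the $w^+$ sense with $\mu_*\neq\delta_\infty$, then $\mathsf F_t\to\mathsf F_*$ weakly, where $\mathsf F_*$ is defined by $\int f\,d\mathsf F_*=\frac1A\int\frac1m f(m)\,d\mu_*(m)$. Moreover, in both cases $A\in(0,\infty)$.
   Context: Set $M_0=0$, $M_n=\sum_{k=1}^n m_k$, and for $t>0$, $\ell_t=\inf\{\ell\in\mathbb N:M_\ell\ge t\}$, $\bar t=t-M_{\ell_t-1}$. Define measures on $\overline{\mathbb R}_+=[0,\infty]$ (the compact metric space with metric $d(x,y)=|\arctan x-\arctan y|$): the empirical mass measure $\mu_t=\frac{\bar t}{t}\delta_{\bar t}+\sum_{k=1}^{\ell_t-1}\frac{m_k}{t}\delta_{m_k}$ and the empirical mass frequency $\mathsf F_t=\frac{1}{\ell_t}\delta_{\bar t}+\sum_{k=1}^{\ell_t-1}\frac{1}{\ell_t}\delta_{m_k}$. Weak convergence $\lambda_t\to\lambda_*$ means $\int f\,d\lambda_t\to\int f\,d\lambda_*$ for all continuous $f$ on $[0,\infty]$. $\mathsf F_t\to\mathsf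 F_*$ in $L^1$ means $\mathsf F_*$ is a measure on $\mathbb R_+$ with $\mathsf F_t\to\mathsf F_*$ weakly and $\int m\,d\mathsf F_t(m)\to\int m\,d\mathsf F_*(m)<\infty$. $\mu_t\to\mu_*$ in the $w^+$ sense means $\mu_t\to\mu_*$ weakly and $\int\frac1m\,d\mu_t(m)\to\int\frac1m\,d\mu_*(m)<\infty$. (The paper also assumes in this proposition a family of random variables with $k$-independent means $v_m$ continuous on $[0,\infty]$, which plays no role in the conclusion.) *)

theory Defs
  imports "HOL-Probability.Probability"
begin

text \<open>The sequence m is indexed from 1 (m 0 is irrelevant).
  Measures on [0,\<infinity>] are Borel measures on the type ennreal (order topology,
  homeomorphic to [0,\<infinity>] with the arctan metric).\<close>

definition Mpart :: "(nat \<Rightarrow> real) \<Rightarrow> nat \<Rightarrow> real" where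
  "Mpart m n = (\<Sum>k=1..n. m k)"

definition ell :: "(nat \<Rightarrow> real) \<Rightarrow> real \<Rightarrow> nat" where
  "ell m t = (LEAST l. Mpart m l \<ge> t)"

definition tbar :: "(nat \<Rightarrow> real) \<Rightarrow> real \<Rightarrow> real" where
  "tbar m t = t - Mpart m (ell m t - 1)"

definition emp_mass :: "(nat \<Rightarrow> real) \<Rightarrow> real \<Rightarrow> ennreal measure" where
  "emp_mass m t = measure_of UNIV (sets borel)
     (\<lambda>A. ennreal (tbar m t / t) * indicator A (ennreal (tbar m t))
        + (\<Sum>k\<in>{1..<ell m t}. ennreal (m k / t) * indicator A (ennreal (m k))))"

definition emp_freq :: "(nat \<Rightarrow> real) \<Rightarrow> real \<Rightarrow> ennreal measure" where
  "emp_freq m t = measure_of UNIV (sets borel)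
     (\<lambda>A. ennreal (1 / real (ell m t)) * indicator A (ennreal (tbar m t))
        + (\<Sum>k\<in>{1..<ell m t}. ennreal (1 / real (ell m t)) * indicator A (ennreal (m k))))"

definition weak_conv_inf :: "(real \<Rightarrow> ennreal measure) \<Rightarrow> ennreal measure \<Rightarrow> bool" where
  "weak_conv_inf lam L \<longleftrightarrow>
     (\<forall>f :: ennreal \<Rightarrow> real. continuous_on UNIV f \<longrightarrow>
        ((\<lambda>t. integral\<^sup>L (lam t) f) \<longlongrightarrow> integral\<^sup>L L f) at_top)"

text \<open>F_t \<rightarrow> F_* in L^1: F_* lives on [0,\<infinity>), weak convergence, and convergence of first moments (finite limit).\<close>
definition L1_conv :: "(real \<Rightarrow> ennreal measure) \<Rightarrow> ennreal measure \<Rightarrow> bool" where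
  "L1_conv lam L \<longleftrightarrow> emeasure L {top} = 0 \<and> weak_conv_inf lam L \<and>
     ((\<lambda>t. \<integral>\<^sup>+ x. x \<partial>(lam t)) \<longlongrightarrow> (\<integral>\<^sup>+ x. x \<partial>L)) at_top \<and>
     (\<integral>\<^sup>+ x. x \<partial>L) < \<infinity>"

text \<open>w+ convergence: weak convergence plus convergence of \<integral> 1/m (finite limit); 1/0 = \<infinity>.\<close>
definition wplus_conv :: "(real \<Rightarrow> ennreal measure) \<Rightarrow> ennreal measure \<Rightarrow> bool" where
  "wplus_conv lam L \<longleftrightarrow> weak_conv_inf lam L \<and>
     ((\<lambda>t. \<integral>\<^sup>+ x. inverse x \<partial>(lam t)) \<longlongrightarrow> (\<integral>\<^sup>+ x. inverse x \<partial>L)) at_top \<and>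
     (\<integral>\<^sup>+ x. inverse x \<partial>L) < \<infinity>"

end

theory Submission imports Defs begin

definition PM :: "nat set \<Rightarrow> (nat \<Rightarrow> real) \<Rightarrow> (nat \<Rightarrow> real) \<Rightarrow> ennreal measure" where
  "PM I w q = distr (density (count_space I) (\<lambda>i. ennreal (w i))) borel (\<lambda>i. ennreal (q i))"

lemma PM_sets[simp]: "sets (PM I w q) = sets borel" and PM_space[simp]: "space (PM I w q) = UNIV"
  by (simp_all add: PM_def)

lemma PM_emeasure:
  assumes "finite I" "A \<in> sets borel"
  shows "emeasure (PM I w q) A = (\<Sum>i\<in>I. ennreal (w i) * indicator A (ennreal (q i)))"
proof -
  have "emeasure (PM I w q) A = emeasure (density (count_space I) (\<lambda>i. ennreal (w i))) ((\<lambda>i. ennreal (q i)) -` A \<inter> I)"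
    unfolding PM_def using assms by (subst emeasure_distr) auto
  also have "\<dots> = (\<integral>\<^sup>+ i. ennreal (w i) * indicator ((\<lambda>i. ennreal (q i)) -` A \<inter> I) i \<partial>count_space I)"
    by (subst emeasure_density) auto
  also have "\<dots> = (\<Sum>i\<in>I. ennreal (w i) * indicator ((\<lambda>i. ennreal (q i)) -` A \<inter> I) i)"
    using assms by (simp add: nn_integral_count_space_finite)
  also have "\<dots> = (\<Sum>i\<in>I. ennreal (w i) * indicator A (ennreal (q i)))"
    by (intro sum.cong) (auto simp: indicator_def)
  finally show ?thesis .
qed

lemma PM_nn:
  assumes "finite I" "g \<in> borel_measurable borel"
  shows "(\<integral>\<^sup>+x. g x \<partial>PM I w q) = (\<Sum>i\<in>I. ennreal (w i) * g (ennreal (q i)))"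
  unfolding PM_def using assms
  by (simp add: nn_integral_distr nn_integral_density nn_integral_count_space_finite)

lemma PM_int:
  assumes "finite I" "\<And>i. w i \<ge> 0" "f \<in> borel_measurable borel"
  shows "integral\<^sup>L (PM I w q) (f::ennreal \<Rightarrow> real) = (\<Sum>i\<in>I. w i * f (ennreal (q i)))"
  unfolding PM_def using assms
  by (simp add: integral_distr integral_density lebesgue_integral_count_space_finite)

lemma PM_finite:
  assumes "finite I"
  shows "finite_measure (PM I w q)"
  apply (rule finite_measureI)
  using assms by (simp add: PM_emeasure)

definition qq :: "(nat \<Rightarrow> real) \<Rightarrow> real \<Rightarrow> nat \<Rightarrow> real" where
  "qq m t i = (if i = 0 then tbar m t else m i)"

lemma Mpart_0[simp]: "Mpart m 0 = 0" by (simp add: Mpart_def)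

lemma ell_facts:
  assumes div: "filterlim (Mpart m) at_top sequentially" and t: "t > 0"
  shows "ell m t \<ge> 1" "Mpart m (ell m t) \<ge> t" "Mpart m (ell m t - 1) < t"
proof -
  have ex: "\<exists>l. Mpart m l \<ge> t"
    using div unfolding filterlim_at_top eventually_sequentially by blast
  show 2: "Mpart m (ell m t) \<ge> t" unfolding ell_def by (rule LeastI_ex[OF ex])
  show 1: "ell m t \<ge> 1"
  proof (rule ccontr)
    assume "\<not> 1 \<le> ell m t" then have "ell m t = 0" by simp
    with 2 t show False by simp
  qed
  show "Mpart m (ell m t - 1) < t"
  proof -
    have "ell m t - 1 < ell m t" using 1 by simp
    then have "\<not> Mpart m (ell m t - 1) \<ge> t" unfolding ell_def by (rule not_less_Least)
    then show ?thesis by simp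
  qed
qed

lemma qq_pos:
  assumes pos: "\<And>k. k \<ge> 1 \<Longrightarrow> m k > 0" and div: "filterlim (Mpart m) at_top sequentially" and t: "t > 0"
  shows "qq m t i > 0"
  using ell_facts[OF div t] pos[of i] by (auto simp: qq_def tbar_def)

lemma sum_qq:
  assumes div: "filterlim (Mpart m) at_top sequentially" and t: "t > 0"
  shows "(\<Sum>i\<in>{0..<ell m t}. qq m t i) = t"
proof -
  have l: "ell m t \<ge> 1" using ell_facts[OF div t] by simp
  have "(\<Sum>i\<in>{0..<ell m t}. qq m t i) = qq m t 0 + (\<Sum>i\<in>{1..<ell m t}. qq m t i)"
    using l by (subst sum.atLeast_Suc_lessThan) auto
  also have "(\<Sum>i\<in>{1..<ell m t}. qq m t i) = (\<Sum>i\<in>{1..<ell m t}. m i)"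
    by (intro sum.cong) (auto simp: qq_def)
  also have "\<dots> = Mpart m (ell m t - 1)"
    unfolding Mpart_def using l by (intro sum.cong) auto
  finally show ?thesis by (simp add: qq_def tbar_def)
qed

lemma sigma_sets_borel: "sigma_sets UNIV (sets borel) = sets (borel :: ennreal measure)"
  by (metis sets.sigma_sets_eq space_borel)

lemma emp_mass_PM:
  assumes div: "filterlim (Mpart m) at_top sequentially" and t: "t > 0"
  shows "emp_mass m t = PM {0..<ell m t} (\<lambda>i. qq m t i / t) (qq m t)"
proof -
  have l: "ell m t \<ge> 1" using ell_facts[OF div t] by simp
  have "PM {0..<ell m t} (\<lambda>i. qq m t i / t) (qq m t) = measure_of UNIV (sets borel) (emeasure (PM {0..<ell m t} (\<lambda>i. qq m t i / t) (qq m t)))"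
    using measure_of_of_measure[of "PM {0..<ell m t} (\<lambda>i. qq m t i / t) (qq m t)"] by simp
  also have "\<dots> = emp_mass m t"
    unfolding emp_mass_def
  proof (rule measure_of_eq)
    have qq0: "qq m t 0 = tbar m t" by (simp add: qq_def)
    fix a assume "a \<in> sigma_sets UNIV (sets (borel::ennreal measure))"
    then have a: "a \<in> sets borel" by (simp add: sigma_sets_borel)
    have "emeasure (PM {0..<ell m t} (\<lambda>i. qq m t i / t) (qq m t)) a
      = (\<Sum>i\<in>{0..<ell m t}. ennreal (qq m t i / t) * indicator a (ennreal (qq m t i)))"
      using a by (simp add: PM_emeasure)
    also have "\<dots> = ennreal (qq m t 0 / t) * indicator a (ennreal (qq m t 0)) + (\<Sum>i\<in>{1..<ell m t}. ennreal (qq m t i / t) * indicator a (ennreal (qq m t i)))"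
      using l by (subst sum.atLeast_Suc_lessThan) auto
    also have "(\<Sum>i\<in>{1..<ell m t}. ennreal (qq m t i / t) * indicator a (ennreal (qq m t i))) = (\<Sum>k\<in>{1..<ell m t}. ennreal (m k / t) * indicator a (ennreal (m k)))"
      by (intro sum.cong) (auto simp: qq_def)
    finally show "emeasure (PM {0..<ell m t} (\<lambda>i. qq m t i / t) (qq m t)) a = ennreal (tbar m t / t) * indicator a (ennreal (tbar m t)) +
          (\<Sum>k\<in>{1..<ell m t}. ennreal (m k / t) * indicator a (ennreal (m k)))"
      by (simp add: qq0)
  qed (simp add: sets.sets_into_space)
  finally show ?thesis by simp
qed

lemma emp_freq_PM:
  assumes div: "filterlim (Mpart m) at_top sequentially" and t: "t > 0"
  shows "emp_freq m t = PM {0..<ell m t} (\<lambda>i. 1 / real (ell m t)) (qq m t)"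
proof -
  have l: "ell m t \<ge> 1" using ell_facts[OF div t] by simp
  have "PM {0..<ell m t} (\<lambda>i. 1 / real (ell m t)) (qq m t) = measure_of UNIV (sets borel) (emeasure (PM {0..<ell m t} (\<lambda>i. 1 / real (ell m t)) (qq m t)))"
    using measure_of_of_measure[of "PM {0..<ell m t} (\<lambda>i. 1 / real (ell m t)) (qq m t)"] by simp
  also have "\<dots> = emp_freq m t"
    unfolding emp_freq_def
  proof (rule measure_of_eq)
    have qq0: "qq m t 0 = tbar m t" by (simp add: qq_def)
    fix a assume "a \<in> sigma_sets UNIV (sets (borel::ennreal measure))"
    then have a: "a \<in> sets borel" by (simp add: sigma_sets_borel)
    have "emeasure (PM {0..<ell m t} (\<lambda>i. 1 / real (ell m t)) (qq m t)) a
      = (\<Sum>i\<in>{0..<ell m t}. ennreal (1 / real (ell m t)) * indicator a (ennreal (qq m t i)))"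
      using a by (simp add: PM_emeasure)
    also have "\<dots> = ennreal (1 / real (ell m t)) * indicator a (ennreal (qq m t 0)) + (\<Sum>i\<in>{1..<ell m t}. ennreal (1 / real (ell m t)) * indicator a (ennreal (qq m t i)))"
      using l by (subst sum.atLeast_Suc_lessThan) auto
    also have "(\<Sum>i\<in>{1..<ell m t}. ennreal (1 / real (ell m t)) * indicator a (ennreal (qq m t i))) = (\<Sum>k\<in>{1..<ell m t}. ennreal (1 / real (ell m t)) * indicator a (ennreal (m k)))"
      by (intro sum.cong) (auto simp: qq_def)
    finally show "emeasure (PM {0..<ell m t} (\<lambda>i. 1 / real (ell m t)) (qq m t)) a = ennreal (1 / real (ell m t)) * indicator a (ennreal (tbar m t)) +
          (\<Sum>k\<in>{1..<ell m t}. ennreal (1 / real (ell m t)) * indicator a (ennreal (m k)))"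
      by (simp add: qq0)
  qed (simp add: sets.sets_into_space)
  finally show ?thesis by simp
qed

lemma approx_tendsto:
  fixes x :: "'b \<Rightarrow> real" and X :: real
  assumes "\<And>e. e > 0 \<Longrightarrow> \<exists>a A. (a \<longlongrightarrow> A) F \<and> eventually (\<lambda>t. \<bar>x t - a t\<bar> \<le> e) F \<and> \<bar>A - X\<bar> \<le> e"
  shows "(x \<longlongrightarrow> X) F"
proof (rule tendstoI)
  fix e :: real assume e: "e > 0"
  obtain a A where a: "(a \<longlongrightarrow> A) F" and ev: "eventually (\<lambda>t. \<bar>x t - a t\<bar> \<le> e/4) F" and A: "\<bar>A - X\<bar> \<le> e/4"
    using assms[of "e/4"] e by auto
  have "eventually (\<lambda>t. dist (a t) A < e/4) F" using tendstoD[OF a, of "e/4"] e by simp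
  with ev show "eventually (\<lambda>t. dist (x t) X < e) F"
  proof eventually_elim
    case (elim t) then show ?case using A e unfolding dist_real_def by linarith
  qed
qed

lemma ennreal_enn2real_le': "ennreal (enn2real x) \<le> x"
  by (cases x) auto

lemma nice:
  fixes N :: "ennreal measure" and g :: "ennreal \<Rightarrow> ennreal" and h :: "ennreal \<Rightarrow> real"
  assumes sN: "sets N = sets borel" and fN: "finite_measure N"
    and gm: "g \<in> borel_measurable borel" and fin: "(\<integral>\<^sup>+x. g x \<partial>N) < \<infinity>"
    and hm: "h \<in> borel_measurable borel" and hB: "\<And>x. \<bar>h x\<bar> \<le> B"
  shows "AE x in N. g x \<noteq> \<infinity>"
    and "integrable N (\<lambda>x. enn2real (g x))"
    and "integral\<^sup>L N (\<lambda>x. enn2real (g x)) = enn2real (\<integral>\<^sup>+x. g x \<partial>N)"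
    and "integrable N (\<lambda>x. h x * enn2real (g x))"
    and "integrable N h"
proof -
  have gN: "g \<in> borel_measurable N" unfolding measurable_cong_sets[OF sN refl] using gm .
  have hN: "h \<in> borel_measurable N" unfolding measurable_cong_sets[OF sN refl] using hm .
  show ae: "AE x in N. g x \<noteq> \<infinity>"
    using nn_integral_PInf_AE[OF gN] fin by simp
  have grN: "(\<lambda>x. enn2real (g x)) \<in> borel_measurable N" using gN by (rule borel_measurable_enn2real)
  have "(\<integral>\<^sup>+x. ennreal (enn2real (g x)) \<partial>N) \<le> (\<integral>\<^sup>+x. g x \<partial>N)"
    by (intro nn_integral_mono) (simp add: ennreal_enn2real_le')
  then show int: "integrable N (\<lambda>x. enn2real (g x))"
    using fin by (intro integrableI_nonneg[OF grN]) auto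
  have "integral\<^sup>L N (\<lambda>x. enn2real (g x)) = enn2real (\<integral>\<^sup>+x. ennreal (enn2real (g x)) \<partial>N)"
    by (rule integral_eq_nn_integral[OF grN]) auto
  also have "(\<integral>\<^sup>+x. ennreal (enn2real (g x)) \<partial>N) = (\<integral>\<^sup>+x. g x \<partial>N)"
    apply (rule nn_integral_cong_AE)
    using ae by eventually_elim (auto simp: less_top)
  finally show "integral\<^sup>L N (\<lambda>x. enn2real (g x)) = enn2real (\<integral>\<^sup>+x. g x \<partial>N)" .
  have intB: "integrable N (\<lambda>x. B * enn2real (g x))" using int by simp
  show "integrable N (\<lambda>x. h x * enn2real (g x))"
  proof (rule Bochner_Integration.integrable_bound[OF intB])
    show "(\<lambda>x. h x * enn2real (g x)) \<in> borel_measurable N" by (rule borel_measurable_times[OF hN grN])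
    show "AE x in N. norm (h x * enn2real (g x)) \<le> norm (B * enn2real (g x))"
    proof (rule AE_I2)
      fix x
      have "\<bar>h x\<bar> * enn2real (g x) \<le> B * enn2real (g x)"
        using hB[of x] by (intro mult_right_mono) auto
      moreover have "B \<ge> 0" using hB[of x] by linarith
      ultimately show "norm (h x * enn2real (g x)) \<le> norm (B * enn2real (g x))"
        by (simp add: abs_mult)
    qed
  qed
  show "integrable N h"
    using hB hN by (intro finite_measure.integrable_const_bound[OF fN]) auto
qed

lemma UI:
  fixes L :: "real \<Rightarrow> ennreal measure" and M :: "ennreal measure" and g :: "ennreal \<Rightarrow> ennreal" and f :: "ennreal \<Rightarrow> real"
  assumes sL: "eventually (\<lambda>t. sets (L t) = sets borel \<and> finite_measure (L t)) at_top"
    and sM: "sets M = sets borel" and fM: "finite_measure M"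
    and w: "weak_conv_inf L M"
    and gc: "continuous_on UNIV g"
    and gl: "((\<lambda>t. \<integral>\<^sup>+x. g x \<partial>L t) \<longlongrightarrow> (\<integral>\<^sup>+x. g x \<partial>M)) at_top"
    and gfin: "(\<integral>\<^sup>+x. g x \<partial>M) < \<infinity>"
    and fc: "continuous_on UNIV f"
  shows "((\<lambda>t. integral\<^sup>L (L t) (\<lambda>x. f x * enn2real (g x))) \<longlongrightarrow> integral\<^sup>L M (\<lambda>x. f x * enn2real (g x))) at_top"
proof -
  have gm: "g \<in> borel_measurable borel" using gc by (rule borel_measurable_continuous_onI)
  have fm: "f \<in> borel_measurable borel" using fc by (rule borel_measurable_continuous_onI)
  obtain B where B: "\<And>x. \<bar>f x\<bar> \<le> B"
  proof -
    have "compact (range f)" by (rule compact_continuous_image[OF fc compact_UNIV])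
    then have "bounded (range f)" by (rule compact_imp_bounded)
    then show ?thesis using that unfolding bounded_real by auto
  qed
  have B0: "B \<ge> 0" using B[of 0] by linarith
  define G where "G K x = enn2real (min (g x) (ennreal K))" for K :: real and x
  have Gc: "continuous_on UNIV (G K)" for K
    unfolding continuous_on_eq_continuous_at[OF open_UNIV]
  proof (intro ballI)
    fix x :: ennreal
    have gx: "(g \<longlongrightarrow> g x) (at x)" using gc by (simp add: continuous_on_eq_continuous_at isCont_def)
    have "((\<lambda>y. min (g y) (ennreal K)) \<longlongrightarrow> min (g x) (ennreal K)) (at x)" by (intro tendsto_min gx tendsto_const)
    moreover have "min (g x) (ennreal K) = ennreal (enn2real (min (g x) (ennreal K)))"
      by (rule ennreal_enn2real[symmetric]) (simp add: min_less_iff_disj)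
    ultimately have "((\<lambda>y. min (g y) (ennreal K)) \<longlongrightarrow> ennreal (enn2real (min (g x) (ennreal K)))) (at x)" by simp
    from tendsto_enn2real[OF this] have "((\<lambda>y. enn2real (min (g y) (ennreal K))) \<longlongrightarrow> enn2real (min (g x) (ennreal K))) (at x)"
      by simp
    then show "isCont (G K) x" unfolding isCont_def G_def .
  qed
  have Gm: "G K \<in> borel_measurable borel" for K using Gc by (rule borel_measurable_continuous_onI)
  have G0: "0 \<le> G K x" for K x by (simp add: G_def)
  have GK: "G K x \<le> K" if "K \<ge> 0" for K x
  proof -
    have "G K x \<le> enn2real (ennreal K)" unfolding G_def by (intro enn2real_mono) auto
    then show ?thesis using that by simp
  qed
  have Gg: "G K x \<le> enn2real (g x)" if "g x \<noteq> \<infinity>" for K x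
    unfolding G_def using that by (intro enn2real_mono) (auto simp: less_top)
  have Gint: "integrable N (G K)" "integrable N (\<lambda>x. f x * G K x)"
    if N: "sets N = sets borel" "finite_measure N" and K: "K \<ge> 0" for N K
  proof -
    have GN: "G K \<in> borel_measurable N" unfolding measurable_cong_sets[OF N(1) refl] by (rule Gm)
    have fN: "f \<in> borel_measurable N" unfolding measurable_cong_sets[OF N(1) refl] by (rule fm)
    show "integrable N (G K)"
      by (rule finite_measure.integrable_const_bound[OF N(2), where B=K]) (use GN GK[OF K] G0 in auto)
    show "integrable N (\<lambda>x. f x * G K x)"
    proof (rule finite_measure.integrable_const_bound[OF N(2), where B="B*K"])
      show "AE x in N. norm (f x * G K x) \<le> B * K"
      proof (rule AE_I2)
        fix x
        have "\<bar>f x\<bar> * G K x \<le> B * K" using B[of x] GK[OF K, of x] G0[of K x] B0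
          by (intro mult_mono) auto
        then show "norm (f x * G K x) \<le> B * K" using G0[of K x] by (simp add: abs_mult)
      qed
    qed (use fN GN in simp)
  qed
  have est: "\<bar>integral\<^sup>L N (\<lambda>x. f x * enn2real (g x)) - integral\<^sup>L N (\<lambda>x. f x * G K x)\<bar>
      \<le> B * (integral\<^sup>L N (\<lambda>x. enn2real (g x)) - integral\<^sup>L N (G K))"
    if N: "sets N = sets borel" "finite_measure N" "(\<integral>\<^sup>+x. g x \<partial>N) < \<infinity>" and K: "K \<ge> 0" for N K
  proof -
    note n1 = nice[OF N(1,2) gm N(3) fm B]
    note n2 = Gint[OF N(1,2) K]
    have "integral\<^sup>L N (\<lambda>x. f x * enn2real (g x)) - integral\<^sup>L N (\<lambda>x. f x * G K x)
        = integral\<^sup>L N (\<lambda>x. f x * enn2real (g x) - f x * G K x)"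
      by (rule Bochner_Integration.integral_diff[symmetric]) (fact n1 n2)+
    also have "\<bar>\<dots>\<bar> \<le> integral\<^sup>L N (\<lambda>x. \<bar>f x * enn2real (g x) - f x * G K x\<bar>)"
      using integral_norm_bound[of N "\<lambda>x. f x * enn2real (g x) - f x * G K x"] by simp
    also have "\<dots> \<le> integral\<^sup>L N (\<lambda>x. B * (enn2real (g x) - G K x))"
    proof (rule integral_mono_AE)
      show "integrable N (\<lambda>x. \<bar>f x * enn2real (g x) - f x * G K x\<bar>)"
        by (intro integrable_abs Bochner_Integration.integrable_diff n1 n2)
      show "integrable N (\<lambda>x. B * (enn2real (g x) - G K x))"
        by (intro integrable_mult_right Bochner_Integration.integrable_diff n1 n2)
      show "AE x in N. \<bar>f x * enn2real (g x) - f x * G K x\<bar> \<le> B * (enn2real (g x) - G K x)"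
        using n1(1)
      proof eventually_elim
        case (elim x)
        have "\<bar>f x * enn2real (g x) - f x * G K x\<bar> = \<bar>f x\<bar> * (enn2real (g x) - G K x)"
        proof -
          have "enn2real (g x) - G K x \<ge> 0" using Gg[OF elim, of K] by simp
          then show ?thesis by (simp add: abs_mult right_diff_distrib[symmetric])
        qed
        also have "\<dots> \<le> B * (enn2real (g x) - G K x)"
          using Gg[OF elim, of K] B[of x] by (intro mult_right_mono) auto
        finally show ?case .
      qed
    qed
    also have "\<dots> = B * (integral\<^sup>L N (\<lambda>x. enn2real (g x)) - integral\<^sup>L N (G K))"
      using n1 n2 by (simp add: Bochner_Integration.integral_diff)
    finally show ?thesis .
  qed
  have L1: "((\<lambda>t. integral\<^sup>L (L t) (G K)) \<longlongrightarrow> integral\<^sup>L M (G K)) at_top" for K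
    using w Gc unfolding weak_conv_inf_def by blast
  have L2: "((\<lambda>t. integral\<^sup>L (L t) (\<lambda>x. f x * G K x)) \<longlongrightarrow> integral\<^sup>L M (\<lambda>x. f x * G K x)) at_top" for K
    using w continuous_on_mult[OF fc Gc] unfolding weak_conv_inf_def by blast
  have Lfin: "eventually (\<lambda>t. (\<integral>\<^sup>+x. g x \<partial>L t) < \<infinity>) at_top"
    using order_tendstoD(2)[OF gl gfin] .
  have goodL: "eventually (\<lambda>t. sets (L t) = sets borel \<and> finite_measure (L t) \<and> (\<integral>\<^sup>+x. g x \<partial>L t) < \<infinity>) at_top"
    using sL Lfin by eventually_elim auto
  note nM = nice[OF sM fM gm gfin fm B]
  have L3: "((\<lambda>t. integral\<^sup>L (L t) (\<lambda>x. enn2real (g x))) \<longlongrightarrow> integral\<^sup>L M (\<lambda>x. enn2real (g x))) at_top"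
  proof -
    have "((\<lambda>t. \<integral>\<^sup>+x. g x \<partial>L t) \<longlongrightarrow> ennreal (enn2real (\<integral>\<^sup>+x. g x \<partial>M))) at_top"
      using gl gfin by (simp add: ennreal_enn2real)
    from tendsto_enn2real[OF this] have "((\<lambda>t. enn2real (\<integral>\<^sup>+x. g x \<partial>L t)) \<longlongrightarrow> integral\<^sup>L M (\<lambda>x. enn2real (g x))) at_top"
      by (simp add: nM(3))
    then show ?thesis
    proof (rule Lim_transform_eventually)
      show "\<forall>\<^sub>F t in at_top. enn2real (\<integral>\<^sup>+x. g x \<partial>L t) = integral\<^sup>L (L t) (\<lambda>x. enn2real (g x))"
        using goodL by eventually_elim (use nice[OF _ _ gm _ fm B] in auto)
    qed
  qed
  have L4: "(\<lambda>K::nat. integral\<^sup>L M (G (real K))) \<longlonglongrightarrow> integral\<^sup>L M (\<lambda>x. enn2real (g x))"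
  proof (rule integral_dominated_convergence[where w="\<lambda>x. enn2real (g x)"])
    show "(\<lambda>x. enn2real (g x)) \<in> borel_measurable M"
      unfolding measurable_cong_sets[OF sM refl] using gm by simp
    show "G (real i) \<in> borel_measurable M" for i
      unfolding measurable_cong_sets[OF sM refl] by (rule Gm)
    show "integrable M (\<lambda>x. enn2real (g x))" by (rule nM(2))
    show "AE x in M. (\<lambda>i. G (real i) x) \<longlonglongrightarrow> enn2real (g x)"
      using nM(1)
    proof eventually_elim
      case (elim x)
      obtain n :: nat where n: "enn2real (g x) \<le> real n" using real_arch_simple by blast
      show ?case
      proof (rule tendsto_eventually)
        show "\<forall>\<^sub>F i in sequentially. G (real i) x = enn2real (g x)"
          unfolding eventually_sequentially
        proof (intro exI allI impI)
          fix i assume "n \<le> i"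
          have "g x = ennreal (enn2real (g x))" using elim by (simp add: less_top)
          also have "\<dots> \<le> ennreal (real i)" using n \<open>n \<le> i\<close> by (intro ennreal_leI) simp
          finally have "g x \<le> ennreal (real i)" .
          then show "G (real i) x = enn2real (g x)" unfolding G_def by (simp add: min_absorb1)
        qed
      qed
    qed
    show "AE x in M. norm (G (real i) x) \<le> enn2real (g x)" for i
      using nM(1) by eventually_elim (use Gg G0 in auto)
  qed
  show ?thesis
  proof (rule approx_tendsto)
    fix e :: real assume e: "e > 0"
    define c where "c = e / (4 * (B + 1))"
    have c: "c > 0" using e B0 by (simp add: c_def)
    have Bc: "B * c \<le> e/4"
    proof -
      have "B * c = e/4 * (B / (B + 1))" using B0 by (simp add: c_def field_simps)
      also have "\<dots> \<le> e/4 * 1" using B0 e by (intro mult_left_mono) auto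
      finally show ?thesis by simp
    qed
    obtain K :: nat where K: "\<bar>integral\<^sup>L M (G (real K)) - integral\<^sup>L M (\<lambda>x. enn2real (g x))\<bar> < c"
      using LIMSEQ_D[OF L4 c] by auto
    define X where "X = integral\<^sup>L M (\<lambda>x. enn2real (g x)) - integral\<^sup>L M (G (real K))"
    have X: "X < c" using K unfolding X_def by linarith
    have "((\<lambda>t. integral\<^sup>L (L t) (\<lambda>x. enn2real (g x)) - integral\<^sup>L (L t) (G (real K))) \<longlongrightarrow> X) at_top"
      unfolding X_def by (intro tendsto_diff L3 L1)
    from tendstoD[OF this c]
    have ev: "eventually (\<lambda>t. dist (integral\<^sup>L (L t) (\<lambda>x. enn2real (g x)) - integral\<^sup>L (L t) (G (real K))) X < c) at_top" .
    show "\<exists>a A. (a \<longlongrightarrow> A) at_top \<and>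
          (\<forall>\<^sub>F t in at_top. \<bar>integral\<^sup>L (L t) (\<lambda>x. f x * enn2real (g x)) - a t\<bar> \<le> e) \<and>
          \<bar>A - integral\<^sup>L M (\<lambda>x. f x * enn2real (g x))\<bar> \<le> e"
    proof (intro exI conjI)
      show "((\<lambda>t. integral\<^sup>L (L t) (\<lambda>x. f x * G (real K) x)) \<longlongrightarrow> integral\<^sup>L M (\<lambda>x. f x * G (real K) x)) at_top"
        by (rule L2)
      show "\<forall>\<^sub>F t in at_top. \<bar>integral\<^sup>L (L t) (\<lambda>x. f x * enn2real (g x)) - integral\<^sup>L (L t) (\<lambda>x. f x * G (real K) x)\<bar> \<le> e"
        using goodL ev
      proof eventually_elim
        case (elim t)
        have "\<bar>integral\<^sup>L (L t) (\<lambda>x. f x * enn2real (g x)) - integral\<^sup>L (L t) (\<lambda>x. f x * G (real K) x)\<bar>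
          \<le> B * (integral\<^sup>L (L t) (\<lambda>x. enn2real (g x)) - integral\<^sup>L (L t) (G (real K)))"
          using elim by (intro est) auto
        also have "\<dots> \<le> B * (2 * c)"
          using elim(2) X B0 by (intro mult_left_mono) (auto simp: dist_real_def)
        also have "\<dots> = 2 * (B * c)" by simp
        also have "\<dots> \<le> e" using Bc e by linarith
        finally show ?case .
      qed
      have "\<bar>integral\<^sup>L M (\<lambda>x. f x * enn2real (g x)) - integral\<^sup>L M (\<lambda>x. f x * G (real K) x)\<bar> \<le> B * X"
        unfolding X_def using sM fM gfin by (intro est) auto
      also have "\<dots> \<le> B * c" using X B0 by (intro mult_left_mono) auto
      also have "\<dots> \<le> e" using Bc e by linarith
      finally show "\<bar>integral\<^sup>L M (\<lambda>x. f x * G (real K) x) - integral\<^sup>L M (\<lambda>x. f x * enn2real (g x))\<bar> \<le> e"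
        by (simp add: abs_minus_commute)
    qed
  qed
qed

lemma dirac_if_AE:
  fixes N :: "ennreal measure"
  assumes sN: "sets N = sets borel" and one: "emeasure N UNIV = 1" and ae: "AE x in N. x = a"
  shows "N = return borel a"
proof (rule measure_eqI)
  show "sets N = sets (return borel a)" using sN by simp
  fix A assume "A \<in> sets N"
  then have A: "A \<in> sets borel" using sN by simp
  have spN: "space N = UNIV" using sets_eq_imp_space_eq[OF sN] by simp
  have "emeasure N A = (\<integral>\<^sup>+x. indicator A x \<partial>N)"
    using A sN by (simp add: nn_integral_indicator)
  also have "\<dots> = (\<integral>\<^sup>+x. indicator A a \<partial>N)"
    by (rule nn_integral_cong_AE) (use ae in auto)
  also have "\<dots> = indicator A a" using one spN by simp
  finally show "emeasure N A = emeasure (return borel a) A" using A by simp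
qed

lemma prob_from_weak:
  fixes N :: "ennreal measure"
  assumes w: "weak_conv_inf L N" and ev: "eventually (\<lambda>t. integral\<^sup>L (L t) (\<lambda>_. 1::real) = 1) at_top"
    and fN: "finite_measure N"
  shows "emeasure N (space N) = 1"
proof -
  have "((\<lambda>t. integral\<^sup>L (L t) (\<lambda>_. 1::real)) \<longlongrightarrow> integral\<^sup>L N (\<lambda>_. 1::real)) at_top"
    using w[unfolded weak_conv_inf_def, rule_format, OF continuous_on_const] .
  moreover have "((\<lambda>t. integral\<^sup>L (L t) (\<lambda>_. 1::real)) \<longlongrightarrow> 1) at_top"
    by (rule tendsto_eventually) (use ev in simp)
  ultimately have "integral\<^sup>L N (\<lambda>_. 1::real) = 1" by (rule tendsto_unique[rotated]) simp
  then have "measure N (space N) = 1" by simp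
  then show ?thesis using finite_measure.emeasure_eq_measure[OF fN] by simp
qed

context
  fixes m :: "nat \<Rightarrow> real" and t :: real
  assumes pos: "\<And>k. k \<ge> 1 \<Longrightarrow> m k > 0"
    and div: "filterlim (Mpart m) at_top sequentially"
    and t: "t > 0"
begin

lemma ell_pos: "real (ell m t) > 0" using ell_facts[OF div t] by simp

lemma mass_int: "f \<in> borel_measurable borel \<Longrightarrow>
  integral\<^sup>L (emp_mass m t) f = (\<Sum>i\<in>{0..<ell m t}. qq m t i / t * f (ennreal (qq m t i)))"
  unfolding emp_mass_PM[OF div t]
  by (rule PM_int) (use qq_pos[OF pos div t] t in \<open>auto intro: less_imp_le\<close>)

lemma freq_int: "f \<in> borel_measurable borel \<Longrightarrow>
  integral\<^sup>L (emp_freq m t) f = (\<Sum>i\<in>{0..<ell m t}. 1 / real (ell m t) * f (ennreal (qq m t i)))"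
  unfolding emp_freq_PM[OF div t]
  by (rule PM_int) auto

lemma mass_nn: "g \<in> borel_measurable borel \<Longrightarrow>
  (\<integral>\<^sup>+x. g x \<partial>emp_mass m t) = (\<Sum>i\<in>{0..<ell m t}. ennreal (qq m t i / t) * g (ennreal (qq m t i)))"
  unfolding emp_mass_PM[OF div t] by (rule PM_nn) auto

lemma freq_nn: "g \<in> borel_measurable borel \<Longrightarrow>
  (\<integral>\<^sup>+x. g x \<partial>emp_freq m t) = (\<Sum>i\<in>{0..<ell m t}. ennreal (1 / real (ell m t)) * g (ennreal (qq m t i)))"
  unfolding emp_freq_PM[OF div t] by (rule PM_nn) auto

lemma mass_basic: "sets (emp_mass m t) = sets borel \<and> finite_measure (emp_mass m t)"
  unfolding emp_mass_PM[OF div t] by (simp add: PM_finite)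

lemma freq_basic: "sets (emp_freq m t) = sets borel \<and> finite_measure (emp_freq m t)"
  unfolding emp_freq_PM[OF div t] by (simp add: PM_finite)

lemma mass_one: "integral\<^sup>L (emp_mass m t) (\<lambda>_. 1::real) = 1"
proof -
  have "integral\<^sup>L (emp_mass m t) (\<lambda>_. 1::real) = (\<Sum>i\<in>{0..<ell m t}. qq m t i / t)"
    using mass_int[of "\<lambda>_. 1::real"] by simp
  also have "\<dots> = (\<Sum>i\<in>{0..<ell m t}. qq m t i) / t" by (simp add: sum_divide_distrib)
  also have "\<dots> = 1" using sum_qq[OF div t] t by simp
  finally show ?thesis .
qed

lemma freq_one: "integral\<^sup>L (emp_freq m t) (\<lambda>_. 1::real) = 1"
  using ell_pos freq_int[of "\<lambda>_. 1::real"] by simp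

lemma freq_moment: "(\<integral>\<^sup>+x. x \<partial>emp_freq m t) = ennreal (t / real (ell m t))"
proof -
  have "(\<integral>\<^sup>+x. x \<partial>emp_freq m t) = (\<Sum>i\<in>{0..<ell m t}. ennreal (1 / real (ell m t)) * ennreal (qq m t i))"
    using freq_nn[of "\<lambda>x. x"] by simp
  also have "\<dots> = (\<Sum>i\<in>{0..<ell m t}. ennreal (1 / real (ell m t) * qq m t i))"
    using qq_pos[OF pos div t] by (intro sum.cong refl) (subst ennreal_mult''[symmetric], auto simp: less_imp_le)
  also have "\<dots> = ennreal (\<Sum>i\<in>{0..<ell m t}. 1 / real (ell m t) * qq m t i)"
    using qq_pos[OF pos div t] by (intro sum_ennreal) (simp add: less_imp_le)
  also have "(\<Sum>i\<in>{0..<ell m t}. 1 / real (ell m t) * qq m t i) = t / real (ell m t)"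
    using sum_qq[OF div t] by (simp add: sum_divide_distrib[symmetric])
  finally show ?thesis .
qed

lemma mass_invmoment: "(\<integral>\<^sup>+x. inverse x \<partial>emp_mass m t) = ennreal (real (ell m t) / t)"
proof -
  have "(\<integral>\<^sup>+x. inverse x \<partial>emp_mass m t) = (\<Sum>i\<in>{0..<ell m t}. ennreal (qq m t i / t) * inverse (ennreal (qq m t i)))"
    using mass_nn[of "\<lambda>x. inverse x"] by simp
  also have "\<dots> = (\<Sum>i\<in>{0..<ell m t}. ennreal (1 / t))"
  proof (intro sum.cong refl)
    fix i
    have q: "qq m t i > 0" using qq_pos[OF pos div t] .
    have "ennreal (qq m t i / t) * inverse (ennreal (qq m t i)) = ennreal (qq m t i / t) * ennreal (inverse (qq m t i))"
      using q by (simp add: inverse_ennreal)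
    also have "\<dots> = ennreal (qq m t i / t * inverse (qq m t i))"
      using q by (intro ennreal_mult''[symmetric]) simp
    also have "qq m t i / t * inverse (qq m t i) = 1 / t" using q by (simp add: field_simps)
    finally show "ennreal (qq m t i / t) * inverse (ennreal (qq m t i)) = ennreal (1 / t)" .
  qed
  also have "\<dots> = ennreal (real (ell m t) / t)"
  proof -
    have "(\<Sum>i\<in>{0..<ell m t}. ennreal (1 / t)) = ennreal (real (ell m t)) * ennreal (1 / t)"
      by (simp add: ennreal_of_nat_eq_real_of_nat)
    also have "\<dots> = ennreal (real (ell m t) * (1 / t))"
      by (rule ennreal_mult''[symmetric]) (use t in simp)
    finally show ?thesis by simp
  qed
  finally show ?thesis .
qed

lemma mass_freq_rel: "f \<in> borel_measurable borel \<Longrightarrow>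
  integral\<^sup>L (emp_mass m t) f = real (ell m t) / t * integral\<^sup>L (emp_freq m t) (\<lambda>x. f x * enn2real x)"
proof -
  assume fm: "f \<in> borel_measurable borel"
  have fm2: "(\<lambda>x. f x * enn2real x) \<in> borel_measurable borel" using fm by measurable
  show ?thesis
    unfolding mass_int[OF fm] freq_int[OF fm2] sum_distrib_left
  proof (intro sum.cong refl)
    fix i
    have q: "qq m t i > 0" using qq_pos[OF pos div t] .
    then show "qq m t i / t * f (ennreal (qq m t i)) =
         real (ell m t) / t * (1 / real (ell m t) * (f (ennreal (qq m t i)) * enn2real (ennreal (qq m t i))))"
      using ell_pos t by (simp add: field_simps)
  qed
qed

lemma freq_mass_rel: "f \<in> borel_measurable borel \<Longrightarrow>
  integral\<^sup>L (emp_freq m t) f = t / real (ell m t) * integral\<^sup>L (emp_mass m t) (\<lambda>x. f x * enn2real (inverse x))"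
proof -
  assume fm: "f \<in> borel_measurable borel"
  have fm2: "(\<lambda>x. f x * enn2real (inverse x)) \<in> borel_measurable borel" using fm by measurable
  show ?thesis
    unfolding mass_int[OF fm2] freq_int[OF fm] sum_distrib_left
  proof (intro sum.cong refl)
    fix i
    have q: "qq m t i > 0" using qq_pos[OF pos div t] .
    then have "enn2real (inverse (ennreal (qq m t i))) = 1 / qq m t i"
      by (simp add: inverse_ennreal divide_inverse)
    then show "1 / real (ell m t) * f (ennreal (qq m t i)) =
         t / real (ell m t) * (qq m t i / t * (f (ennreal (qq m t i)) * enn2real (inverse (ennreal (qq m t i)))))"
      using ell_pos t q by (simp add: field_simps)
  qed
qed

end


lemma isCont_inverse_ennreal: "isCont (inverse :: ennreal \<Rightarrow> ennreal) x"
  using continuous_on_inverse_ennreal[OF continuous_on_id, of UNIV]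
  by (simp add: continuous_on_eq_continuous_at)

lemma part_a:
  fixes m :: "nat \<Rightarrow> real" and A :: ennreal and Fs :: "ennreal measure"
  assumes pos: "\<And>k. k \<ge> 1 \<Longrightarrow> m k > 0"
    and div: "filterlim (Mpart m) at_top sequentially"
    and lim: "((\<lambda>t. ennreal (real (ell m t) / t)) \<longlongrightarrow> A) at_top"
    and Fs: "finite_measure Fs" "sets Fs = sets borel" "L1_conv (emp_freq m) Fs" "Fs \<noteq> return borel 0"
  shows "0 < A \<and> A < \<infinity> \<and> weak_conv_inf (emp_mass m) (density Fs (\<lambda>x. A * x))"
proof -
  from Fs(3) have top0: "emeasure Fs {top} = 0" and w: "weak_conv_inf (emp_freq m) Fs"
    and mom: "((\<lambda>t. \<integral>\<^sup>+x. x \<partial>emp_freq m t) \<longlongrightarrow> (\<integral>\<^sup>+x. x \<partial>Fs)) at_top" and cfin: "(\<integral>\<^sup>+x. x \<partial>Fs) < \<infinity>"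
    unfolding L1_conv_def by auto
  define c where "c = (\<integral>\<^sup>+x. x \<partial>Fs)"
  have evt: "eventually (\<lambda>t::real. t > 0) at_top" by (rule eventually_gt_at_top)
  have spFs: "space Fs = UNIV" using sets_eq_imp_space_eq[OF Fs(2)] by simp
  have "emeasure Fs (space Fs) = 1"
    by (rule prob_from_weak[OF w _ Fs(1)]) (use evt in eventually_elim, rule freq_one[OF pos div])
  then have one: "emeasure Fs UNIV = 1" using spFs by simp
  have idm: "(\<lambda>x::ennreal. x) \<in> borel_measurable Fs" unfolding measurable_cong_sets[OF Fs(2) refl] by simp
  have c0: "c \<noteq> 0"
  proof
    assume "c = 0"
    then have "AE x in Fs. x = 0" using nn_integral_0_iff_AE[OF idm] unfolding c_def by simp
    then have "Fs = return borel 0" by (rule dirac_if_AE[OF Fs(2) one])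
    with Fs(4) show False ..
  qed
  have Aeq: "A = inverse c"
  proof (rule tendsto_unique[OF _ lim])
    show "(at_top::real filter) \<noteq> bot" by simp
    have "((\<lambda>t. inverse (\<integral>\<^sup>+x. x \<partial>emp_freq m t)) \<longlongrightarrow> inverse c) at_top"
      unfolding c_def by (rule isCont_tendsto_compose[OF isCont_inverse_ennreal mom])
    then show "((\<lambda>t. ennreal (real (ell m t) / t)) \<longlongrightarrow> inverse c) at_top"
    proof (rule Lim_transform_eventually)
      show "\<forall>\<^sub>F t in at_top. inverse (\<integral>\<^sup>+x. x \<partial>emp_freq m t) = ennreal (real (ell m t) / t)"
        using evt
      proof eventually_elim
        case (elim t)
        have "t / real (ell m t) > 0" using elim ell_pos[OF pos div elim] by simp
        then show ?case using freq_moment[OF pos div elim] by (simp add: inverse_ennreal)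
      qed
    qed
  qed
  have A0: "0 < A" using cfin Aeq by (simp add: ennreal_inverse_positive c_def)
  have Afin: "A < \<infinity>" using c0 Aeq by (simp add: less_top[symmetric] ennreal_inverse_eq_top_iff)
  define a where "a = enn2real A"
  have Aa: "A = ennreal a" using Afin by (simp add: a_def ennreal_enn2real)
  have a0: "a > 0" using A0 Afin by (simp add: a_def enn2real_positive_iff)
  have ratio: "((\<lambda>t. real (ell m t) / t) \<longlongrightarrow> a) at_top"
  proof -
    have "((\<lambda>t. enn2real (ennreal (real (ell m t) / t))) \<longlongrightarrow> a) at_top"
      using tendsto_enn2real[OF lim[unfolded Aa]] a0 by simp
    then show ?thesis
      by (rule Lim_transform_eventually) (use evt in eventually_elim, simp)
  qed
  show ?thesis
  proof (intro conjI A0 Afin)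
    show "weak_conv_inf (emp_mass m) (density Fs (\<lambda>x. A * x))"
      unfolding weak_conv_inf_def
    proof (intro allI impI)
      fix f :: "ennreal \<Rightarrow> real" assume fc: "continuous_on UNIV f"
      have fm: "f \<in> borel_measurable borel" using fc by (rule borel_measurable_continuous_onI)
      have sL: "eventually (\<lambda>t. sets (emp_freq m t) = sets borel \<and> finite_measure (emp_freq m t)) at_top"
        using evt by eventually_elim (rule freq_basic[OF pos div])
      have U: "((\<lambda>t. integral\<^sup>L (emp_freq m t) (\<lambda>x. f x * enn2real x)) \<longlongrightarrow> integral\<^sup>L Fs (\<lambda>x. f x * enn2real x)) at_top"
        using UI[where L="emp_freq m" and M=Fs and g="\<lambda>x. x" and f=f, OF sL Fs(2,1) w continuous_on_id mom cfin fc]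
        by simp
      have "((\<lambda>t. real (ell m t) / t * integral\<^sup>L (emp_freq m t) (\<lambda>x. f x * enn2real x)) \<longlongrightarrow> a * integral\<^sup>L Fs (\<lambda>x. f x * enn2real x)) at_top"
        by (rule tendsto_mult[OF ratio U])
      then have lim1: "((\<lambda>t. integral\<^sup>L (emp_mass m t) f) \<longlongrightarrow> a * integral\<^sup>L Fs (\<lambda>x. f x * enn2real x)) at_top"
        by (rule Lim_transform_eventually) (use evt in eventually_elim, simp add: mass_freq_rel[OF pos div _ fm])
      have "density Fs (\<lambda>x. A * x) = density Fs (\<lambda>x. ennreal (a * enn2real x))"
      proof (rule density_cong)
        show "(\<lambda>x. A * x) \<in> borel_measurable Fs" unfolding measurable_cong_sets[OF Fs(2) refl] by measurable
        show "(\<lambda>x. ennreal (a * enn2real x)) \<in> borel_measurable Fs" unfolding measurable_cong_sets[OF Fs(2) refl] by measurable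
        show "AE x in Fs. A * x = ennreal (a * enn2real x)"
        proof (rule AE_I[where N="{top}"])
          show "{x \<in> space Fs. \<not> (A * x = ennreal (a * enn2real x))} \<subseteq> {top}"
          proof clarify
            fix x assume ne: "A * x \<noteq> ennreal (a * enn2real x)"
            show "x = top"
            proof (rule ccontr)
              assume "x \<noteq> top"
              then have "x = ennreal (enn2real x)" by (simp add: ennreal_enn2real less_top)
              then have "A * x = ennreal a * ennreal (enn2real x)" using Aa by simp
              also have "\<dots> = ennreal (a * enn2real x)" using a0 by (simp add: ennreal_mult)
              finally show False using ne by simp
            qed
          qed
          show "emeasure Fs {top} = 0" by (rule top0)
          show "{top} \<in> sets Fs" using Fs(2) by simp
        qed
      qed
      also have "integral\<^sup>L (density Fs (\<lambda>x. ennreal (a * enn2real x))) f = integral\<^sup>L Fs (\<lambda>x. (a * enn2real x) *\<^sub>R f x)"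
        by (rule integral_density) (use a0 in \<open>auto simp: measurable_cong_sets[OF Fs(2) refl] fm\<close>)
      also have "\<dots> = a * integral\<^sup>L Fs (\<lambda>x. f x * enn2real x)"
      proof -
        have "(\<lambda>x. (a * enn2real x) *\<^sub>R f x) = (\<lambda>x. a * (f x * enn2real x))" by (simp add: fun_eq_iff)
        then show ?thesis by (simp only: integral_mult_right_zero)
      qed
      finally show "((\<lambda>t. integral\<^sup>L (emp_mass m t) f) \<longlongrightarrow> integral\<^sup>L (density Fs (\<lambda>x. A * x)) f) at_top"
        using lim1 by simp
    qed
  qed
qed


lemma part_b:
  fixes m :: "nat \<Rightarrow> real" and A :: ennreal and \<mu>s :: "ennreal measure"
  assumes pos: "\<And>k. k \<ge> 1 \<Longrightarrow> m k > 0"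
    and div: "filterlim (Mpart m) at_top sequentially"
    and lim: "((\<lambda>t. ennreal (real (ell m t) / t)) \<longlongrightarrow> A) at_top"
    and Ms: "finite_measure \<mu>s" "sets \<mu>s = sets borel" "wplus_conv (emp_mass m) \<mu>s" "\<mu>s \<noteq> return borel \<infinity>"
  shows "0 < A \<and> A < \<infinity> \<and> weak_conv_inf (emp_freq m) (density \<mu>s (\<lambda>x. inverse A * inverse x))"
proof -
  from Ms(3) have w: "weak_conv_inf (emp_mass m) \<mu>s"
    and mom: "((\<lambda>t. \<integral>\<^sup>+x. inverse x \<partial>emp_mass m t) \<longlongrightarrow> (\<integral>\<^sup>+x. inverse x \<partial>\<mu>s)) at_top"
    and cfin: "(\<integral>\<^sup>+x. inverse x \<partial>\<mu>s) < \<infinity>"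
    unfolding wplus_conv_def by auto
  define c where "c = (\<integral>\<^sup>+x. inverse x \<partial>\<mu>s)"
  have evt: "eventually (\<lambda>t::real. t > 0) at_top" by (rule eventually_gt_at_top)
  have spM: "space \<mu>s = UNIV" using sets_eq_imp_space_eq[OF Ms(2)] by simp
  have "emeasure \<mu>s (space \<mu>s) = 1"
    by (rule prob_from_weak[OF w _ Ms(1)]) (use evt in eventually_elim, rule mass_one[OF pos div])
  then have one: "emeasure \<mu>s UNIV = 1" using spM by simp
  have invm: "(\<lambda>x::ennreal. inverse x) \<in> borel_measurable \<mu>s" unfolding measurable_cong_sets[OF Ms(2) refl] by measurable
  have Aeq: "A = c"
  proof (rule tendsto_unique[OF _ lim])
    show "(at_top::real filter) \<noteq> bot" by simp
    show "((\<lambda>t. ennreal (real (ell m t) / t)) \<longlongrightarrow> c) at_top"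
      unfolding c_def using mom
    proof (rule Lim_transform_eventually)
      show "\<forall>\<^sub>F t in at_top. (\<integral>\<^sup>+x. inverse x \<partial>emp_mass m t) = ennreal (real (ell m t) / t)"
        using evt by eventually_elim (rule mass_invmoment[OF pos div])
    qed
  qed
  have c0: "c \<noteq> 0"
  proof
    assume "c = 0"
    then have "AE x in \<mu>s. inverse x = 0" using nn_integral_0_iff_AE[OF invm] unfolding c_def by simp
    then have "AE x in \<mu>s. x = top" by (simp add: ennreal_inverse_eq_0_iff)
    then have "\<mu>s = return borel top" by (rule dirac_if_AE[OF Ms(2) one])
    with Ms(4) show False by simp
  qed
  have A0: "0 < A" using c0 Aeq by (simp add: zero_less_iff_neq_zero)
  have Afin: "A < \<infinity>" using cfin Aeq by (simp add: c_def)
  define a where "a = enn2real A"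
  have Aa: "A = ennreal a" using Afin by (simp add: a_def ennreal_enn2real)
  have a0: "a > 0" using A0 Afin by (simp add: a_def enn2real_positive_iff)
  have ratio: "((\<lambda>t. real (ell m t) / t) \<longlongrightarrow> a) at_top"
  proof -
    have "((\<lambda>t. enn2real (ennreal (real (ell m t) / t))) \<longlongrightarrow> a) at_top"
      using tendsto_enn2real[OF lim[unfolded Aa]] a0 by simp
    then show ?thesis
      by (rule Lim_transform_eventually) (use evt in eventually_elim, simp)
  qed
  have ratio2: "((\<lambda>t. t / real (ell m t)) \<longlongrightarrow> inverse a) at_top"
  proof -
    have "((\<lambda>t. inverse (real (ell m t) / t)) \<longlongrightarrow> inverse a) at_top"
      by (rule tendsto_inverse[OF ratio]) (use a0 in simp)
    then show ?thesis by simp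
  qed
  have aeM: "AE x in \<mu>s. inverse x \<noteq> \<infinity>"
    using nn_integral_PInf_AE[OF invm] cfin by simp
  show ?thesis
  proof (intro conjI A0 Afin)
    show "weak_conv_inf (emp_freq m) (density \<mu>s (\<lambda>x. inverse A * inverse x))"
      unfolding weak_conv_inf_def
    proof (intro allI impI)
      fix f :: "ennreal \<Rightarrow> real" assume fc: "continuous_on UNIV f"
      have fm: "f \<in> borel_measurable borel" using fc by (rule borel_measurable_continuous_onI)
      have sL: "eventually (\<lambda>t. sets (emp_mass m t) = sets borel \<and> finite_measure (emp_mass m t)) at_top"
        using evt by eventually_elim (rule mass_basic[OF pos div])
      have U: "((\<lambda>t. integral\<^sup>L (emp_mass m t) (\<lambda>x. f x * enn2real (inverse x))) \<longlongrightarrow> integral\<^sup>L \<mu>s (\<lambda>x. f x * enn2real (inverse x))) at_top"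
        using UI[where L="emp_mass m" and M="\<mu>s" and g="\<lambda>x. inverse x" and f=f, OF sL Ms(2,1) w
            continuous_on_inverse_ennreal[OF continuous_on_id] mom cfin fc]
        by simp
      have "((\<lambda>t. t / real (ell m t) * integral\<^sup>L (emp_mass m t) (\<lambda>x. f x * enn2real (inverse x))) \<longlongrightarrow> inverse a * integral\<^sup>L \<mu>s (\<lambda>x. f x * enn2real (inverse x))) at_top"
        by (rule tendsto_mult[OF ratio2 U])
      then have lim1: "((\<lambda>t. integral\<^sup>L (emp_freq m t) f) \<longlongrightarrow> inverse a * integral\<^sup>L \<mu>s (\<lambda>x. f x * enn2real (inverse x))) at_top"
        by (rule Lim_transform_eventually) (use evt in eventually_elim, simp add: freq_mass_rel[OF pos div _ fm])
      have "density \<mu>s (\<lambda>x. inverse A * inverse x) = density \<mu>s (\<lambda>x. ennreal (inverse a * enn2real (inverse x)))"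
      proof (rule density_cong)
        show "(\<lambda>x. inverse A * inverse x) \<in> borel_measurable \<mu>s" unfolding measurable_cong_sets[OF Ms(2) refl] by measurable
        show "(\<lambda>x. ennreal (inverse a * enn2real (inverse x))) \<in> borel_measurable \<mu>s" unfolding measurable_cong_sets[OF Ms(2) refl] by measurable
        show "AE x in \<mu>s. inverse A * inverse x = ennreal (inverse a * enn2real (inverse x))"
          using aeM
        proof eventually_elim
          case (elim x)
          have e1: "inverse x = ennreal (enn2real (inverse x))"
          proof -
            have "inverse x < top" using elim by (simp add: less_top[symmetric])
            then show ?thesis by (rule ennreal_enn2real[symmetric])
          qed
          have e2: "inverse A = ennreal (inverse a)" using Aa a0 by (simp add: inverse_ennreal)
          have "inverse A * inverse x = ennreal (inverse a) * ennreal (enn2real (inverse x))"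
            using e2 e1 by (rule arg_cong2)
          also have "\<dots> = ennreal (inverse a * enn2real (inverse x))" using a0 by (simp add: ennreal_mult)
          finally show ?case .
        qed
      qed
      also have "integral\<^sup>L (density \<mu>s (\<lambda>x. ennreal (inverse a * enn2real (inverse x)))) f = integral\<^sup>L \<mu>s (\<lambda>x. (inverse a * enn2real (inverse x)) *\<^sub>R f x)"
        by (rule integral_density) (use a0 in \<open>auto simp: measurable_cong_sets[OF Ms(2) refl] fm\<close>)
      also have "\<dots> = inverse a * integral\<^sup>L \<mu>s (\<lambda>x. f x * enn2real (inverse x))"
      proof -
        have "(\<lambda>x. (inverse a * enn2real (inverse x)) *\<^sub>R f x) = (\<lambda>x. inverse a * (f x * enn2real (inverse x)))" by (simp add: fun_eq_iff)
        then show ?thesis by (simp only: integral_mult_right_zero)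
      qed
      finally show "((\<lambda>t. integral\<^sup>L (emp_freq m t) f) \<longlongrightarrow> integral\<^sup>L (density \<mu>s (\<lambda>x. inverse A * inverse x)) f) at_top"
        using lim1 by simp
    qed
  qed
qed

theorem proposition3p3:
  fixes m :: "nat \<Rightarrow> real" and A :: ennreal
  assumes pos: "\<And>k. k \<ge> 1 \<Longrightarrow> m k > 0"
    and div: "filterlim (Mpart m) at_top sequentially"
    and lim: "((\<lambda>t. ennreal (real (ell m t) / t)) \<longlongrightarrow> A) at_top"
  shows
    "(\<forall>Fs. finite_measure Fs \<and> sets Fs = sets borel \<and>
          L1_conv (emp_freq m) Fs \<and> Fs \<noteq> return borel 0 \<longrightarrow>
        0 < A \<and> A < \<infinity> \<and> weak_conv_inf (emp_mass m) (density Fs (\<lambda>x. A * x)))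
   \<and> (\<forall>\<mu>s. finite_measure \<mu>s \<and> sets \<mu>s = sets borel \<and>
          wplus_conv (emp_mass m) \<mu>s \<and> \<mu>s \<noteq> return borel \<infinity> \<longrightarrow>
        0 < A \<and> A < \<infinity> \<and> weak_conv_inf (emp_freq m) (density \<mu>s (\<lambda>x. inverse A * inverse x)))"
  using part_a[OF pos div lim] part_b[OF pos div lim] by blast

end
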